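(* Consider a single invocation of an MPI barrier among a set of participating MPI ranks, and a checkpoint coordinator that sends a first message to each participating rank, each rank replying with its current status relative to the barrier (not yet entered, inside, or exited). If at least one of the replies to the first messages reports that its rank has exited the barrier, and the coordinator, after receiving these replies, sends a second message to each participating rank, then each participating rank will reply to the second message that it has entered the barrier (and possibly also exited it).
   Context: Events (sending/receiving messages, entering/exiting a barrier) are ordered by Lamport's happens-before relation; a rank's reply to a message reflects its state at the moment of replying, which happens after it received the message and before the coordinator receives the reply. Barrier axiom (assumed): for a given invocation of an MPI barrier, it never happens that a rank A exits the barrier before (under happens-before) another participating rank B enters that barrier. *)

theory Defs
  imports Main
begin

datatype status = NotEntered | Inside | Exited

definition status_at ::
  "('e \<Rightarrow> 'e \<Rightarrow> bool) \<Rightarrow> 'e \<Rightarrow> 'e \<Rightarrow> 'e \<Rightarrow> status" where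
  "status_at hb ent ex e =
     (if hb ex e then Exited else if hb ent e then Inside else NotEntered)"

text \<open>A model of one barrier invocation among ranks R, observed by a coordinator.
  hb : Lamport happens-before on events (a strict partial order);
  ent r / ex r : rank r enters / exits the barrier;
  snd1 r / rpl1 r / rcv1 r : coordinator sends 1st message to r, r replies,
     coordinator receives the reply; similarly snd2 / rpl2 / rcv2 for the 2nd message.\<close>
definition barrier_ckpt_model ::
  "'r set \<Rightarrow> ('e \<Rightarrow> 'e \<Rightarrow> bool) \<Rightarrow> ('r \<Rightarrow> 'e) \<Rightarrow> ('r \<Rightarrow> 'e) \<Rightarrow>
   ('r \<Rightarrow> 'e) \<Rightarrow> ('r \<Rightarrow> 'e) \<Rightarrow> ('r \<Rightarrow> 'e) \<Rightarrow>
   ('r \<Rightarrow> 'e) \<Rightarrow> ('r \<Rightarrow> 'e) \<Rightarrow> ('r \<Rightarrow> 'e) \<Rightarrow> bool" where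
  "barrier_ckpt_model R hb ent ex snd1 rpl1 rcv1 snd2 rpl2 rcv2 \<longleftrightarrow>
     \<comment> \<open>happens-before is a strict partial order\<close>
     (\<forall>a. \<not> hb a a) \<and> (\<forall>a b c. hb a b \<longrightarrow> hb b c \<longrightarrow> hb a c) \<and>
     \<comment> \<open>each rank's events (entry, exit, replies) are distinct and totally ordered\<close>
     (\<forall>r\<in>R. \<forall>a\<in>{ent r, ex r, rpl1 r, rpl2 r}. \<forall>b\<in>{ent r, ex r, rpl1 r, rpl2 r}.
         a = b \<or> hb a b \<or> hb b a) \<and>
     (\<forall>r\<in>R. distinct [ent r, ex r, rpl1 r, rpl2 r]) \<and>
     \<comment> \<open>the coordinator's events are totally ordered\<close>
     (\<forall>a\<in>snd1 ` R \<union> rcv1 ` R \<union> snd2 ` R \<union> rcv2 ` R.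
        \<forall>b\<in>snd1 ` R \<union> rcv1 ` R \<union> snd2 ` R \<union> rcv2 ` R. a = b \<or> hb a b \<or> hb b a) \<and>
     \<comment> \<open>a rank enters the barrier before exiting it\<close>
     (\<forall>r\<in>R. hb (ent r) (ex r)) \<and>
     \<comment> \<open>message ordering: send, then reply, then receipt of reply\<close>
     (\<forall>r\<in>R. hb (snd1 r) (rpl1 r) \<and> hb (rpl1 r) (rcv1 r)) \<and>
     (\<forall>r\<in>R. hb (snd2 r) (rpl2 r) \<and> hb (rpl2 r) (rcv2 r)) \<and>
     \<comment> \<open>barrier axiom: no rank exits before another participating rank enters\<close>
     (\<forall>a\<in>R. \<forall>b\<in>R. \<not> hb (ex a) (ent b))"

end

theory Submission
  imports Defs
begin

theorem lemma1:
  assumes model: "barrier_ckpt_model R hb ent ex snd1 rpl1 rcv1 snd2 rpl2 rcv2"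
    and exited: "\<exists>a\<in>R. status_at hb (ent a) (ex a) (rpl1 a) = Exited"
    and after: "\<forall>a\<in>R. \<forall>b\<in>R. hb (rcv1 a) (snd2 b)"
  shows "\<forall>b\<in>R. status_at hb (ent b) (ex b) (rpl2 b) \<in> {Inside, Exited}"
proof
  fix b assume b: "b \<in> R"
  note M = model[unfolded barrier_ckpt_model_def]
  have M1: "\<forall>a b c. hb a b \<longrightarrow> hb b c \<longrightarrow> hb a c" using M by (elim conjE)
  have M2: "\<forall>r\<in>R. \<forall>a\<in>{ent r, ex r, rpl1 r, rpl2 r}. \<forall>b\<in>{ent r, ex r, rpl1 r, rpl2 r}.
         a = b \<or> hb a b \<or> hb b a" using M by (elim conjE)
  have M3: "\<forall>r\<in>R. distinct [ent r, ex r, rpl1 r, rpl2 r]" using M by (elim conjE)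
  have M4: "\<forall>r\<in>R. hb (snd1 r) (rpl1 r) \<and> hb (rpl1 r) (rcv1 r)" using M by (elim conjE)
  have M5: "\<forall>r\<in>R. hb (snd2 r) (rpl2 r) \<and> hb (rpl2 r) (rcv2 r)" using M by (elim conjE)
  have M6: "\<forall>a\<in>R. \<forall>b\<in>R. \<not> hb (ex a) (ent b)" using M by (elim conjE)
  obtain a where a: "a \<in> R" and ea: "hb (ex a) (rpl1 a)"
    using exited unfolding status_at_def by (metis status.distinct(3) status.distinct(5))
  have tr: "\<And>x y z. hb x y \<Longrightarrow> hb y z \<Longrightarrow> hb x z"
    using M1 by blast
  have tot: "ent b = rpl2 b \<or> hb (ent b) (rpl2 b) \<or> hb (rpl2 b) (ent b)"
    using M2 b by simp
  have dist: "ent b \<noteq> rpl2 b"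
    using M3 b by simp
  have m1: "hb (rpl1 a) (rcv1 a)" using M4 a by simp
  have m2: "hb (snd2 b) (rpl2 b)" using M5 b by simp
  have bar: "\<not> hb (ex a) (ent b)" using M6 a b by simp
  have "hb (ent b) (rpl2 b)"
  proof (rule ccontr)
    assume "\<not> hb (ent b) (rpl2 b)"
    with tot dist have "hb (rpl2 b) (ent b)" by auto
    moreover have "hb (ex a) (rpl2 b)"
      using tr[OF tr[OF tr[OF ea m1] after[rule_format, OF a b]] m2] .
    ultimately show False using tr bar by blast
  qed
  then show "status_at hb (ent b) (ex b) (rpl2 b) \<in> {Inside, Exited}"
    by (simp add: status_at_def)
qed

end
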